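(* Let $m\ge2$ be even and let $E_{\mathrm{hsc},m}$ be the $m\times 2$ matrix whose $j$-th row is $(\cos(j\pi/m),\sin(j\pi/m))$, $j=1,\dots,m$. Then for every integer $L\ge2$, $$\mathscr D_{\mathrm a}(E_{\mathrm{hsc},m},L)<\sqrt{2e}\,m\,L^{-m/2}.$$
   Context: For a $k\times m$ matrix $F$, finite $\mathscr A\subset\mathbb{R}$ and bounded $\mathscr X\subset\mathbb{R}^k$, $\mathscr D_{\mathrm s}(F,\mathscr A,\mathscr X):=\sup_{x\in\mathscr X}\inf_{q\in\mathscr A^m}\|x-Fq\|_2$; for an $m\times k$ matrix $E$, $\mathscr D_{\mathrm a}(E,\mathscr A,\mathscr X):=\inf\{\mathscr D_{\mathrm s}(F,\mathscr A,\mathscr X):FE=I_k\}$; and $\mathscr D_{\mathrm a}(E,L):=\inf_{|\mathscr A|=L}\mathscr D_{\mathrm a}(E,\mathscr A,B_1)$ with $B_1$ the closed unit Euclidean ball of $\mathbb{R}^k$ (here $k=2$). *)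

theory Defs
  imports "HOL-Analysis.Analysis"
begin

text \<open>A k x m matrix F (here k = 2)
  is given by its m columns F j :: real^2 (j < m); an m x 2 matrix E by its m rows
  E j :: real^2 (j < m). Index j runs over 0..m-1 (paper: 1..m).\<close>

definition mat_vec :: "nat \<Rightarrow> (nat \<Rightarrow> real^2) \<Rightarrow> (nat \<Rightarrow> real) \<Rightarrow> real^2" where
  "mat_vec m F q = (\<Sum>j<m. q j *\<^sub>R F j)"

definition D_s :: "nat \<Rightarrow> (nat \<Rightarrow> real^2) \<Rightarrow> real set \<Rightarrow> (real^2) set \<Rightarrow> real" where
  "D_s m F A X = (SUP x\<in>X. INF q\<in>({..<m} \<rightarrow>\<^sub>E A). norm (x - mat_vec m F q))"

text \<open>F E = I_2, where F is 2 x m (columns F j) and E is m x 2 (rows E j).\<close>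
definition left_inverse :: "nat \<Rightarrow> (nat \<Rightarrow> real^2) \<Rightarrow> (nat \<Rightarrow> real^2) \<Rightarrow> bool" where
  "left_inverse m F E = (\<forall>a b. (\<Sum>j<m. F j $ a * E j $ b) = (if a = b then 1 else 0))"

definition D_a :: "nat \<Rightarrow> (nat \<Rightarrow> real^2) \<Rightarrow> real set \<Rightarrow> (real^2) set \<Rightarrow> real" where
  "D_a m E A X = (INF F\<in>{F. left_inverse m F E}. D_s m F A X)"

definition D_a_L :: "nat \<Rightarrow> (nat \<Rightarrow> real^2) \<Rightarrow> nat \<Rightarrow> real" where
  "D_a_L m E L = (INF A\<in>{A :: real set. finite A \<and> card A = L}. D_a m E A (cball 0 1))"

text \<open>E_hsc,m: j-th row (cos(j pi/m), sin(j pi/m)), j = 1..m (stored at index j-1).\<close>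
definition E_hsc :: "nat \<Rightarrow> nat \<Rightarrow> real^2" where
  "E_hsc m j = vector [cos (real (j + 1) * pi / real m), sin (real (j + 1) * pi / real m)]"

end

theory Submission imports Defs begin

lemma norm2: "norm (x::real^2) = sqrt ((x$1)^2 + (x$2)^2)"
  by (simp add: norm_vec_def L2_set_def sum_2)

lemma digits: "N < L^n \<Longrightarrow> (\<Sum>k<n. L^k * (N div L^k mod L)) = (N::nat)"
proof (induction n arbitrary: N)
  case 0 then show ?case by simp
next
  case (Suc n)
  have "N div L < L^n" using Suc.prems
    by (metis less_mult_imp_div_less mult.commute power_Suc)
  then have IH: "(\<Sum>k<n. L^k * ((N div L) div L^k mod L)) = N div L" using Suc.IH by blast
  have "(\<Sum>k<Suc n. L^k * (N div L^k mod L)) = N mod L + (\<Sum>k<n. L^(Suc k) * (N div L^(Suc k) mod L))"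
    unfolding sum.lessThan_Suc_shift by simp
  also have "(\<Sum>k<n. L^(Suc k) * (N div L^(Suc k) mod L)) = L * (\<Sum>k<n. L^k * ((N div L) div L^k mod L))"
    by (simp add: sum_distrib_left div_mult2_eq mult.assoc)
  finally show ?case using IH by simp
qed

lemma geom: "(\<Sum>k<n. (real L)^k * (real L - 1)) = real L ^ n - 1"
  by (induction n) (auto simp: algebra_simps)

lemma one_dim:
  fixes L n :: nat and R t :: real
  assumes L2: "L \<ge> 2" and Rpos: "R > 0" and tR: "\<bar>t\<bar> \<le> R"
  shows "\<exists>i. (\<forall>k<n. i k < L) \<and> \<bar>t - (\<Sum>k<n. real L ^ k * ((4*R / real L ^ n) * (real (i k) - (real L - 1)/2)))\<bar> \<le> (4*R / real L ^ n)/2"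
proof -
  define h where "h = 4*R / real L ^ n"
  define P where "P = real L ^ n"
  have P1: "P \<ge> 1" using L2 unfolding P_def by simp
  have hpos: "h > 0" using Rpos P1 L2 unfolding h_def P_def by (intro divide_pos_pos) auto
  have hP: "h * P = 4*R" using P1 L2 unfolding h_def P_def by simp
  define t' where "t' = t/h + (P/2 - 1/2)"
  have Rh: "R/h = P/4" using hP hpos by (simp add: field_simps)
  have "\<bar>t/h\<bar> = \<bar>t\<bar>/h" using hpos by (simp add: abs_divide)
  also have "\<dots> \<le> R/h" using tR hpos by (simp add: divide_right_mono)
  finally have tb: "\<bar>t/h\<bar> \<le> P/4" using Rh by simp
  have tb1: "-(P/4) \<le> t/h" "t/h \<le> P/4" using tb by linarith+
  have lo: "t' + 1/2 \<ge> 0" using tb1 P1 unfolding t'_def by linarith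
  have hi: "t' + 1/2 < P" using tb1 P1 unfolding t'_def by linarith
  define N where "N = nat \<lfloor>t' + 1/2\<rfloor>"
  have fl: "real N = of_int \<lfloor>t' + 1/2\<rfloor>" unfolding N_def using lo by simp
  have "real N < P" using fl hi by linarith
  then have NL: "N < L^n" unfolding P_def by (metis of_nat_less_iff of_nat_power)
  have fc: "of_int \<lfloor>t' + 1/2\<rfloor> \<le> t' + 1/2" "t' + 1/2 < of_int \<lfloor>t' + 1/2\<rfloor> + 1"
    by linarith+
  have Nd: "\<bar>t' - real N\<bar> \<le> 1/2" using fl fc by linarith
  define i where "i k = N div L^k mod L" for k
  have ilt: "\<forall>k<n. i k < L" using L2 unfolding i_def by simp
  have sN: "(\<Sum>k<n. real L ^ k * real (i k)) = real N"
    using arg_cong[OF digits[OF NL], of real] unfolding i_def by simp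
  have "(\<Sum>k<n. real L ^ k * (h * (real (i k) - (real L - 1)/2)))
     = h * (\<Sum>k<n. real L ^ k * real (i k)) - h/2 * (\<Sum>k<n. real L ^ k * (real L - 1))"
    unfolding sum_distrib_left sum_subtractf[symmetric] by (rule sum.cong) (auto simp: field_simps)
  also have "\<dots> = h * (real N - (P/2 - 1/2))" unfolding sN geom P_def by (simp add: algebra_simps)
  finally have S: "(\<Sum>k<n. real L ^ k * (h * (real (i k) - (real L - 1)/2))) = h * (real N - (P/2 - 1/2))" .
  have "t - h * (real N - (P/2 - 1/2)) = h * (t' - real N)" unfolding t'_def using hpos by (simp add: field_simps)
  then have "\<bar>t - (\<Sum>k<n. real L ^ k * (h * (real (i k) - (real L - 1)/2)))\<bar> \<le> h/2"
    using S Nd hpos by (simp add: abs_mult)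
  then show ?thesis using ilt unfolding h_def by blast
qed

lemma sum_split2: "sum f {..<n+(n::nat)} = sum f {..<n} + (\<Sum>k<n. f (k+n))"
proof -
  have e: "{..<n+n} = {..<n} \<union> {n..<n+n}" by auto
  have "sum f {..<n+n} = sum f {..<n} + sum f {n..<n+n}" unfolding e
    by (rule sum.union_disjoint) auto
  also have "sum f {n..<n+n} = (\<Sum>k<n. f (k+n))"
    using sum.shift_bounds_nat_ivl[of f 0 n n] by (simp add: atLeast0LessThan)
  finally show ?thesis .
qed

lemma Ds_nonneg:
  assumes "A \<noteq> {}"
  shows "0 \<le> D_s m F A (cball 0 1)"
proof -
  let ?Q = "{..<m} \<rightarrow>\<^sub>E A"
  have Qne: "?Q \<noteq> {}" using assms by (simp add: PiE_eq_empty_iff)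
  then obtain q0 where q0: "q0 \<in> ?Q" by blast
  define g where "g x = (INF q\<in>?Q. norm (x - mat_vec m F q))" for x
  have g0: "0 \<le> g x" for x unfolding g_def using Qne by (intro cINF_greatest) auto
  have gle: "g x \<le> norm (x - mat_vec m F q0)" for x unfolding g_def using q0
    by (intro cINF_lower bdd_belowI2[where m=0]) simp_all
  have "bdd_above (g ` cball 0 1)"
  proof (rule bdd_aboveI[where M="1 + norm (mat_vec m F q0)"])
    fix y assume "y \<in> g ` cball 0 1"
    then obtain x where x: "x \<in> cball 0 1" "y = g x" by auto
    have "norm (x - mat_vec m F q0) \<le> norm x + norm (mat_vec m F q0)" by (rule norm_triangle_ineq4)
    also have "\<dots> \<le> 1 + norm (mat_vec m F q0)" using x by simp
    finally show "y \<le> 1 + norm (mat_vec m F q0)" using gle[of x] x by simp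
  qed
  then have "g 0 \<le> (SUP x\<in>cball 0 1. g x)" by (intro cSUP_upper) auto
  moreover have "D_s m F A (cball 0 1) = (SUP x\<in>cball 0 1. g x)" unfolding D_s_def g_def by simp
  ultimately show ?thesis using g0[of 0] by simp
qed

lemma Ds_le:
  assumes "\<And>x. x \<in> cball 0 1 \<Longrightarrow> \<exists>q\<in>{..<m} \<rightarrow>\<^sub>E A. norm (x - mat_vec m F q) \<le> B"
  shows "D_s m F A (cball 0 1) \<le> B"
  unfolding D_s_def
proof (rule cSUP_least)
  show "cball (0::real^2) 1 \<noteq> {}" by simp
  fix x :: "real^2" assume "x \<in> cball 0 1"
  then obtain q where q: "q \<in> {..<m} \<rightarrow>\<^sub>E A" "norm (x - mat_vec m F q) \<le> B" using assms by blast
  have bb: "bdd_below ((\<lambda>q. norm (x - mat_vec m F q)) ` ({..<m} \<rightarrow>\<^sub>E A))"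
    by (rule bdd_belowI2[where m=0]) simp
  have "(INF q\<in>{..<m} \<rightarrow>\<^sub>E A. norm (x - mat_vec m F q)) \<le> norm (x - mat_vec m F q)"
    by (rule cINF_lower[OF bb q(1)])
  then show "(INF q\<in>{..<m} \<rightarrow>\<^sub>E A. norm (x - mat_vec m F q)) \<le> B" using q(2) by linarith
qed

lemma aux1: fixes r C S x1 x2 d1 d2 :: real
  assumes "r = C*C+S*S" "r \<noteq> 0"
  shows "x1 - (C/r*(C*x1+S*x2 - d1) - S/r*(C*x2-S*x1-d2)) = (C*d1 - S*d2)/r"
proof -
  have "C/r*(C*x1+S*x2 - d1) - S/r*(C*x2-S*x1-d2) = (C*(C*x1+S*x2 - d1) - S*(C*x2-S*x1-d2))/r"
    by (simp add: diff_divide_distrib)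
  also have "C*(C*x1+S*x2 - d1) - S*(C*x2-S*x1-d2) = r*x1 - (C*d1 - S*d2)"
    unfolding assms(1) by (simp add: algebra_simps)
  also have "(r*x1 - (C*d1 - S*d2))/r = x1 - (C*d1 - S*d2)/r" using assms(2) by (simp add: diff_divide_distrib)
  finally show ?thesis by simp
qed
lemma aux2: fixes r C S x1 x2 d1 d2 :: real
  assumes "r = C*C+S*S" "r \<noteq> 0"
  shows "x2 - (S/r*(C*x1+S*x2 - d1) + C/r*(C*x2-S*x1-d2)) = (S*d1 + C*d2)/r"
proof -
  have "S/r*(C*x1+S*x2 - d1) + C/r*(C*x2-S*x1-d2) = (S*(C*x1+S*x2 - d1) + C*(C*x2-S*x1-d2))/r"
    by (simp add: add_divide_distrib)
  also have "S*(C*x1+S*x2 - d1) + C*(C*x2-S*x1-d2) = r*x2 - (S*d1 + C*d2)"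
    unfolding assms(1) by (simp add: algebra_simps)
  also have "(r*x2 - (S*d1 + C*d2))/r = x2 - (S*d1 + C*d2)/r" using assms(2) by (simp add: diff_divide_distrib)
  finally show ?thesis by simp
qed
lemma aux3: fixes r C S d1 d2 :: real
  assumes "r = C*C+S*S" "r \<noteq> 0"
  shows "((C*d1 - S*d2)/r)^2 + ((S*d1 + C*d2)/r)^2 = (d1^2 + d2^2)/r"
proof -
  have e: "(C*d1 - S*d2)^2 + (S*d1 + C*d2)^2 = r * (d1^2+d2^2)" unfolding assms(1) by (simp add: power2_eq_square algebra_simps)
  have "((C*d1 - S*d2)/r)^2 + ((S*d1 + C*d2)/r)^2 = ((C*d1 - S*d2)^2 + (S*d1 + C*d2)^2)/r^2"
    by (simp only: power_divide add_divide_distrib[symmetric])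
  also have "\<dots> = (d1^2 + d2^2)/r" unfolding e using assms(2) by (simp add: power2_eq_square)
  finally show ?thesis .
qed
theorem mainTheorem3:
  fixes m L :: nat
  assumes "m \<ge> 2" and "even m" and "L \<ge> 2"
  shows "D_a_L m (E_hsc m) L < sqrt (2 * exp 1) * real m * real L powr (- real m / 2)"
proof -
  obtain n where mn: "m = n + n" using assms(2) by (metis evenE mult_2)
  have n1: "n \<ge> 1" using assms(1) mn by simp
  have L2: "L \<ge> 2" by fact
  define \<theta> where "\<theta> k = real (k+1) * pi / real m" for k
  define w where "w k = real L ^ k" for k
  define C where "C = (\<Sum>k<n. w k * cos (\<theta> k))"
  define S where "S = (\<Sum>k<n. w k * sin (\<theta> k))"
  define \<rho>2 where "\<rho>2 = C^2 + S^2"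
  have Ek: "E_hsc m k = vector [cos (\<theta> k), sin (\<theta> k)]" if "k < n" for k
    unfolding E_hsc_def \<theta>_def by simp
  have Ekn: "E_hsc m (k+n) = vector [- sin (\<theta> k), cos (\<theta> k)]" for k
  proof -
    have "real (k + n + 1) * pi / real m = \<theta> k + pi/2"
      unfolding \<theta>_def mn using n1 by (simp add: field_simps)
    then show ?thesis unfolding E_hsc_def by (simp add: cos_add sin_add)
  qed
  have sinpos: "sin (\<theta> k) > 0" if "k < n" for k
  proof (rule sin_gt_zero)
    show "0 < \<theta> k" unfolding \<theta>_def using n1 mn by simp
    have e: "\<theta> k = (real (k+1) / real n) * (pi/2)" unfolding \<theta>_def mn using n1 by (simp add: field_simps)
    have "real (k+1) / real n \<le> 1" using that n1 by simp
    then have "(real (k+1) / real n) * (pi/2) \<le> 1 * (pi/2)" by (intro mult_right_mono) auto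
    then have "\<theta> k \<le> pi/2" using e by simp
    then show "\<theta> k < pi" using pi_gt_zero by linarith
  qed
  have Spos: "S > 0" unfolding S_def w_def
    using n1 sinpos L2 by (intro sum_pos) (auto simp: lessThan_empty_iff)
  have r2pos: "\<rho>2 > 0" unfolding \<rho>2_def using Spos by (simp add: add_nonneg_pos)
  define \<rho> where "\<rho> = sqrt \<rho>2"
  have rpos: "\<rho> > 0" unfolding \<rho>_def using r2pos by simp
  define F :: "nat \<Rightarrow> real^2" where "F j = (if j < n then (w j / \<rho>2) *\<^sub>R vector [C, S] else (w (j-n) / \<rho>2) *\<^sub>R vector [- S, C])" for j
  have Fk: "F k $ 1 = w k / \<rho>2 * C" "F k $ 2 = w k / \<rho>2 * S" if "k < n" for k
    using that unfolding F_def by simp_all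
  have Fkn: "F (k+n) $ 1 = - (w k / \<rho>2 * S)" "F (k+n) $ 2 = w k / \<rho>2 * C" for k
    unfolding F_def by simp_all
  have split: "(\<Sum>j<m. f j) = (\<Sum>k<n. f k + f (k+n))" for f :: "nat \<Rightarrow> real"
    unfolding mn sum_split2 by (simp add: sum.distrib)
  have lin: "(\<Sum>k<n. \<alpha> * (w k * cos (\<theta> k)) + \<beta> * (w k * sin (\<theta> k))) = \<alpha>*C + \<beta>*S" for \<alpha> \<beta>
    unfolding C_def S_def by (simp add: sum.distrib sum_distrib_left)
  have CS: "C/\<rho>2 * C + S/\<rho>2 * S = 1" using r2pos Spos unfolding \<rho>2_def by (simp add: power2_eq_square add_divide_distrib[symmetric])
  have LI: "left_inverse m F (E_hsc m)"
    unfolding left_inverse_def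
  proof (intro allI)
    fix a b :: 2
    have "(\<Sum>j<m. F j $ a * E_hsc m j $ b) = (\<Sum>k<n. F k $ a * E_hsc m k $ b + F (k+n) $ a * E_hsc m (k+n) $ b)"
      by (rule split)
    also have "\<dots> = (if a = b then 1 else 0)"
      using exhaust_2[of a] exhaust_2[of b]
    proof (elim disjE)
      assume ab: "a = 1" "b = 1"
      have "(\<Sum>k<n. F k $ a * E_hsc m k $ b + F (k+n) $ a * E_hsc m (k+n) $ b)
          = (\<Sum>k<n. C/\<rho>2 * (w k * cos (\<theta> k)) + S/\<rho>2 * (w k * sin (\<theta> k)))"
        by (rule sum.cong) (auto simp: ab Fk Fkn Ek Ekn algebra_simps)
      also have "\<dots> = 1" unfolding lin by (rule CS)
      finally show ?thesis using ab by simp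
    next
      assume ab: "a = 1" "b = 2"
      have "(\<Sum>k<n. F k $ a * E_hsc m k $ b + F (k+n) $ a * E_hsc m (k+n) $ b)
          = (\<Sum>k<n. (-S/\<rho>2) * (w k * cos (\<theta> k)) + C/\<rho>2 * (w k * sin (\<theta> k)))"
        by (rule sum.cong) (auto simp: ab Fk Fkn Ek Ekn algebra_simps)
      also have "\<dots> = 0" unfolding lin by (simp add: algebra_simps)
      finally show ?thesis using ab by simp
    next
      assume ab: "a = 2" "b = 1"
      have "(\<Sum>k<n. F k $ a * E_hsc m k $ b + F (k+n) $ a * E_hsc m (k+n) $ b)
          = (\<Sum>k<n. S/\<rho>2 * (w k * cos (\<theta> k)) + (-C/\<rho>2) * (w k * sin (\<theta> k)))"
        by (rule sum.cong) (auto simp: ab Fk Fkn Ek Ekn algebra_simps)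
      also have "\<dots> = 0" unfolding lin by (simp add: algebra_simps)
      finally show ?thesis using ab by simp
    next
      assume ab: "a = 2" "b = 2"
      have "(\<Sum>k<n. F k $ a * E_hsc m k $ b + F (k+n) $ a * E_hsc m (k+n) $ b)
          = (\<Sum>k<n. C/\<rho>2 * (w k * cos (\<theta> k)) + S/\<rho>2 * (w k * sin (\<theta> k)))"
        by (rule sum.cong) (auto simp: ab Fk Fkn Ek Ekn algebra_simps)
      also have "\<dots> = 1" unfolding lin by (rule CS)
      finally show ?thesis using ab by simp
    qed
    finally show "(\<Sum>j<m. F j $ a * E_hsc m j $ b) = (if a = b then 1 else 0)" .
  qed
  define h where "h = 4*\<rho> / real L ^ n"
  define c where "c = (real L - 1)/2"
  define A0 where "A0 = (\<lambda>i. h * (real i - c)) ` {..<L}"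
  have hpos: "h > 0" unfolding h_def using rpos L2 by (intro divide_pos_pos) auto
  have cardA: "card A0 = L" unfolding A0_def
    using hpos by (subst card_image) (auto simp: inj_on_def)
  have finA: "finite A0" unfolding A0_def by simp
  have A0ne: "A0 \<noteq> {}" using cardA L2 by auto
  define B where "B = sqrt 8 / real L ^ n"
  have cover: "\<exists>q\<in>{..<m} \<rightarrow>\<^sub>E A0. norm (x - mat_vec m F q) \<le> B" if x: "x \<in> cball 0 1" for x
  proof -
    define x1 where "x1 = x$1"
    define x2 where "x2 = x$2"
    have "sqrt (x1^2 + x2^2) \<le> 1" using x norm2[of x] unfolding x1_def x2_def by simp
    then have xx: "x1^2 + x2^2 \<le> 1" by simp
    define t1 where "t1 = C*x1 + S*x2"
    define t2 where "t2 = C*x2 - S*x1"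
    have e1: "\<rho>2*(x1^2+x2^2) - t1^2 = (S*x1 - C*x2)^2" unfolding \<rho>2_def t1_def by (simp add: power2_eq_square algebra_simps)
    have e2: "\<rho>2*(x1^2+x2^2) - t2^2 = (C*x1 + S*x2)^2" unfolding \<rho>2_def t2_def by (simp add: power2_eq_square algebra_simps)
    have "\<rho>2*(x1^2+x2^2) \<le> \<rho>2" using xx r2pos by (simp add: mult_left_le)
    then have "t1^2 \<le> \<rho>2" "t2^2 \<le> \<rho>2" using e1 e2 zero_le_power2[of "S*x1 - C*x2"] zero_le_power2[of "C*x1+S*x2"] by linarith+
    then have tb: "\<bar>t1\<bar> \<le> \<rho>" "\<bar>t2\<bar> \<le> \<rho>" unfolding \<rho>_def by (simp_all add: real_le_rsqrt)
    obtain i1 where i1: "\<forall>k<n. i1 k < L"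
      "\<bar>t1 - (\<Sum>k<n. real L ^ k * ((4*\<rho> / real L ^ n) * (real (i1 k) - (real L - 1)/2)))\<bar> \<le> (4*\<rho> / real L ^ n)/2"
      using one_dim[OF L2 rpos tb(1)] by blast
    obtain i2 where i2: "\<forall>k<n. i2 k < L"
      "\<bar>t2 - (\<Sum>k<n. real L ^ k * ((4*\<rho> / real L ^ n) * (real (i2 k) - (real L - 1)/2)))\<bar> \<le> (4*\<rho> / real L ^ n)/2"
      using one_dim[OF L2 rpos tb(2)] by blast
    define q where "q j = (if j < n then h * (real (i1 j) - c) else if j < m then h * (real (i2 (j-n)) - c) else undefined)" for j
    have qA: "q \<in> {..<m} \<rightarrow>\<^sub>E A0"
    proof (rule PiE_I)
      fix j assume j: "j \<in> {..<m}"
      show "q j \<in> A0"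
      proof (cases "j < n")
        case True
        then have "q j = h * (real (i1 j) - c)" "i1 j \<in> {..<L}" using i1(1) unfolding q_def by auto
        then show ?thesis unfolding A0_def by (intro rev_image_eqI[of "i1 j"]) auto
      next
        case False
        then have "q j = h * (real (i2 (j-n)) - c)" "i2 (j-n) \<in> {..<L}" using i2(1) j mn unfolding q_def by auto
        then show ?thesis unfolding A0_def by (intro rev_image_eqI[of "i2 (j-n)"]) auto
      qed
    next
      fix j assume "j \<notin> {..<m}"
      then show "q j = undefined" unfolding q_def using mn by auto
    qed
    define Y1 where "Y1 = (\<Sum>k<n. w k * q k)"
    define Y2 where "Y2 = (\<Sum>k<n. w k * q (k+n))"
    have Y1e: "Y1 = (\<Sum>k<n. real L ^ k * ((4*\<rho> / real L ^ n) * (real (i1 k) - (real L - 1)/2)))"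
      unfolding Y1_def by (rule sum.cong) (auto simp: w_def q_def h_def c_def)
    have Y2e: "Y2 = (\<Sum>k<n. real L ^ k * ((4*\<rho> / real L ^ n) * (real (i2 k) - (real L - 1)/2)))"
      unfolding Y2_def by (rule sum.cong) (auto simp: w_def q_def h_def c_def mn)
    define d1 where "d1 = t1 - Y1"
    define d2 where "d2 = t2 - Y2"
    have d1b: "\<bar>d1\<bar> \<le> h/2" using i1(2) unfolding d1_def Y1e h_def .
    have d2b: "\<bar>d2\<bar> \<le> h/2" using i2(2) unfolding d2_def Y2e h_def .
    have M1: "mat_vec m F q $ 1 = C/\<rho>2 * Y1 - S/\<rho>2 * Y2"
    proof -
      have "mat_vec m F q $ 1 = (\<Sum>j<m. q j * F j $ 1)" unfolding mat_vec_def by simp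
      also have "\<dots> = (\<Sum>k<n. q k * F k $ 1 + q (k+n) * F (k+n) $ 1)" by (rule split)
      also have "\<dots> = (\<Sum>k<n. C/\<rho>2 * (w k * q k) - S/\<rho>2 * (w k * q (k+n)))"
        by (rule sum.cong) (auto simp: Fk Fkn algebra_simps)
      also have "\<dots> = C/\<rho>2 * Y1 - S/\<rho>2 * Y2"
        unfolding Y1_def Y2_def by (simp add: sum_subtractf sum_distrib_left)
      finally show ?thesis .
    qed
    have M2: "mat_vec m F q $ 2 = S/\<rho>2 * Y1 + C/\<rho>2 * Y2"
    proof -
      have "mat_vec m F q $ 2 = (\<Sum>j<m. q j * F j $ 2)" unfolding mat_vec_def by simp
      also have "\<dots> = (\<Sum>k<n. q k * F k $ 2 + q (k+n) * F (k+n) $ 2)" by (rule split)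
      also have "\<dots> = (\<Sum>k<n. S/\<rho>2 * (w k * q k) + C/\<rho>2 * (w k * q (k+n)))"
        by (rule sum.cong) (auto simp: Fk Fkn algebra_simps)
      also have "\<dots> = S/\<rho>2 * Y1 + C/\<rho>2 * Y2"
        unfolding Y1_def Y2_def by (simp add: sum.distrib sum_distrib_left)
      finally show ?thesis .
    qed
    have rr: "\<rho>2 = C*C+S*S" unfolding \<rho>2_def by (simp add: power2_eq_square)
    have ne: "\<rho>2 \<noteq> 0" using r2pos by simp
    have Y1': "Y1 = C*x1+S*x2 - d1" unfolding d1_def t1_def by simp
    have Y2': "Y2 = C*x2-S*x1 - d2" unfolding d2_def t2_def by simp
    have r1: "x1 - (C/\<rho>2 * Y1 - S/\<rho>2 * Y2) = (C*d1 - S*d2)/\<rho>2"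
      unfolding Y1' Y2' by (rule aux1[OF rr ne])
    have r2: "x2 - (S/\<rho>2 * Y1 + C/\<rho>2 * Y2) = (S*d1 + C*d2)/\<rho>2"
      unfolding Y1' Y2' by (rule aux2[OF rr ne])
    have sq: "((C*d1 - S*d2)/\<rho>2)^2 + ((S*d1 + C*d2)/\<rho>2)^2 = (d1^2 + d2^2)/\<rho>2"
      by (rule aux3[OF rr ne])
    have nx: "norm (x - mat_vec m F q) = sqrt ((d1^2 + d2^2)/\<rho>2)"
      unfolding norm2[of "x - mat_vec m F q"] using M1 M2 r1 r2 sq unfolding x1_def x2_def by simp
    have "d1^2 \<le> (h/2)^2" using power_mono[OF d1b abs_ge_zero, of 2] by simp
    moreover have "d2^2 \<le> (h/2)^2" using power_mono[OF d2b abs_ge_zero, of 2] by simp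
    ultimately have "(d1^2 + d2^2)/\<rho>2 \<le> 2*(h/2)^2/\<rho>2" using r2pos by (simp add: divide_right_mono)
    also have "2*(h/2)^2/\<rho>2 = 8 / (real L ^ n)^2"
      unfolding h_def using r2pos unfolding \<rho>_def by (simp add: power_divide power_mult_distrib)
    finally have "norm (x - mat_vec m F q) \<le> sqrt (8 / (real L ^ n)^2)" unfolding nx by simp
    also have "\<dots> = B" unfolding B_def by (simp add: real_sqrt_divide)
    finally show ?thesis using qA by blast
  qed
  have DsB: "D_s m F A0 (cball 0 1) \<le> B" by (rule Ds_le) (rule cover)
  have Da_nonneg: "0 \<le> D_a m (E_hsc m) A (cball 0 1)" if "A \<noteq> {}" for A
    unfolding D_a_def
  proof (rule cINF_greatest)
    show "{F. left_inverse m F (E_hsc m)} \<noteq> {}" using LI by blast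
  qed (rule Ds_nonneg[OF that])
  have "D_a m (E_hsc m) A0 (cball 0 1) \<le> D_s m F A0 (cball 0 1)"
    unfolding D_a_def using LI
    by (intro cINF_lower bdd_belowI2[where m=0] Ds_nonneg[OF A0ne]) simp_all
  moreover have "D_a_L m (E_hsc m) L \<le> D_a m (E_hsc m) A0 (cball 0 1)"
  proof -
    have "bdd_below ((\<lambda>A. D_a m (E_hsc m) A (cball 0 1)) ` {A :: real set. finite A \<and> card A = L})"
    proof (rule bdd_belowI[where m=0])
      fix y assume "y \<in> (\<lambda>A. D_a m (E_hsc m) A (cball 0 1)) ` {A :: real set. finite A \<and> card A = L}"
      then obtain A :: "real set" where "card A = L" "y = D_a m (E_hsc m) A (cball 0 1)" by auto
      moreover then have "A \<noteq> {}" using L2 by auto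
      ultimately show "0 \<le> y" using Da_nonneg by simp
    qed
    then show ?thesis unfolding D_a_L_def using finA cardA by (intro cINF_lower) auto
  qed
  moreover have "B < sqrt (2 * exp 1) * real m * real L powr (- real m / 2)"
  proof -
    have Lpos: "real L > 0" using L2 by simp
    have m2: "- real m / 2 = - real n" using mn by simp
    have Lp: "real L powr (- real m / 2) = inverse (real L ^ n)"
      unfolding m2 powr_minus powr_realpow[OF Lpos] ..
    have "sqrt 8 < sqrt (8 * exp 1)" by simp
    also have "sqrt (8 * exp 1) = 2 * sqrt (2 * exp 1)"
      using real_sqrt_mult[of 4 "2 * exp 1"] by simp
    also have "\<dots> \<le> real m * sqrt (2 * exp 1)" using assms(1) by (intro mult_right_mono) auto
    finally have lt: "sqrt 8 < real m * sqrt (2 * exp 1)" .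
    have Pn: "real L ^ n > 0" using Lpos by simp
    have "sqrt 8 / real L ^ n < (real m * sqrt (2 * exp 1)) / real L ^ n"
      by (rule divide_strict_right_mono[OF lt Pn])
    also have "(real m * sqrt (2 * exp 1)) / real L ^ n = sqrt (2 * exp 1) * real m * inverse (real L ^ n)"
      by (simp add: divide_inverse)
    finally show ?thesis unfolding B_def Lp .
  qed
  ultimately show ?thesis using DsB by linarith
qed

end
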